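(* Let $p\ge 2$, $w\ge 0$, $z\in\mathbb{R}^{p-1}$. For $\lambda>0$ let $(\hat\beta^+(\lambda),\hat\beta^-(\lambda),\hat\theta(\lambda))$ be the unique solution of \[ \min_{\beta^\pm\in\mathbb{R},\,\theta\in\mathbb{R}^{p-1}}\ \frac12\bigl(w-(\beta^+-\beta^-)\bigr)^2+\frac12\|z-\theta\|_2^2+\lambda(\beta^++\beta^-)+\lambda\|\theta\|_1 \quad\text{s.t. } \beta^+\ge0,\ \beta^-\ge0,\ \|\theta\|_1\le\beta^++\beta^-, \] and write $\hat\beta=\hat\beta^+-\hat\beta^-$. Define $\tilde\lambda_1=\min\{\lambda\ge0:\|S(z,\lambda)\|_1+\lambda\le w\}$, $\tilde\lambda_3=\max\{\lambda\ge0:\|S(z,2\lambda)\|_1\ge w\}$ and $\tilde\lambda_4=(w+\|z\|_\infty)/2$. Then for $\lambda>0$: 1. (Big main effect) If $\|z\|_\infty\le\|z\|_1<w$: for $\lambda\ge w$, $\hat\beta=0$ and $\hat\theta=0$; for $\tilde\lambda_1\le\lambda<w$, $\hat\beta=w-\lambda$ and $\hat\theta=S(z,\lambda)$; for $\lambda<\tilde\lambda_1$, there is $\hat\alpha(\lambda)>0$ with $\hat\beta=w-\lambda+\hat\alpha(\lambda)$ and $\hat\theta=S(z,\lambda+\hat\alpha(\lambda))$. 2. (Moderate main effect) If $\|z\|_\infty\le w\le\|z\|_1$: for $\lambda\ge w$, $\hat\beta=0$ and $\hat\theta=0$; for $\tilde\lambda_1\le\lambda<w$, $\hat\beta=w-\lambda$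 and $\hat\theta=S(z,\lambda)$; for $\tilde\lambda_3\le\lambda<\tilde\lambda_1$, there is $\hat\alpha(\lambda)>0$ with $\hat\beta=w-\lambda+\hat\alpha(\lambda)$ and $\hat\theta=S(z,\lambda+\hat\alpha(\lambda))$; for $\lambda<\tilde\lambda_3$, $\hat\beta=w$ and $\hat\theta=S(z,2\lambda)$. 3. (Big interaction) If $w<\|z\|_\infty\le\|z\|_1$: for $\lambda\ge\tilde\lambda_4$, $\hat\beta=0$ and $\hat\theta=0$; for $\tilde\lambda_3\le\lambda<\tilde\lambda_4$, there is $\hat\alpha(\lambda)>0$ with $\hat\beta=w-\lambda+\hat\alpha(\lambda)$ and $\hat\theta=S(z,\lambda+\hat\alpha(\lambda))$; for $\lambda<\tilde\lambda_3$, $\hat\beta=w$ and $\hat\theta=S(z,2\lambda)$.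
   Context: $S(x,t)=\mathrm{sign}(x)\cdot(|x|-t)_+$ is the soft-thresholding function, applied componentwise to vectors. The solution of the displayed problem exists and is unique for every $\lambda>0$. Conventions: the minimum of an empty set is $+\infty$, the maximum of an empty set is $-\infty$, and the maximum of a set unbounded above is $+\infty$. *)

theory Defs
  imports "HOL-Analysis.Analysis" "HOL-Library.Extended_Real"
begin

definition soft :: "real \<Rightarrow> real \<Rightarrow> real" where
  "soft x t = sgn x * max (\<bar>x\<bar> - t) 0"

definition soft_vec :: "real^'n \<Rightarrow> real \<Rightarrow> real^'n" where
  "soft_vec z t = (\<chi> i. soft (z $ i) t)"

definition l1norm :: "real^'n \<Rightarrow> real" where
  "l1norm x = (\<Sum>i\<in>UNIV. \<bar>x $ i\<bar>)"

definition linfnorm :: "real^'n \<Rightarrow> real" where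
  "linfnorm x = Max (range (\<lambda>i. \<bar>x $ i\<bar>))"

definition objective :: "real \<Rightarrow> real^'n \<Rightarrow> real \<Rightarrow> real \<Rightarrow> real \<Rightarrow> real^'n \<Rightarrow> real" where
  "objective w z lam bp bm \<theta> =
     (1/2) * (w - (bp - bm))\<^sup>2 + (1/2) * (norm (z - \<theta>))\<^sup>2 + lam * (bp + bm) + lam * l1norm \<theta>"

definition feasible :: "real \<Rightarrow> real \<Rightarrow> real^'n \<Rightarrow> bool" where
  "feasible bp bm \<theta> \<longleftrightarrow> bp \<ge> 0 \<and> bm \<ge> 0 \<and> l1norm \<theta> \<le> bp + bm"

definition is_solution :: "real \<Rightarrow> real^'n \<Rightarrow> real \<Rightarrow> real \<Rightarrow> real \<Rightarrow> real^'n \<Rightarrow> bool" where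
  "is_solution w z lam bp bm \<theta> \<longleftrightarrow>
     feasible bp bm \<theta> \<and>
     (\<forall>bp' bm' (\<theta>'::real^'n). feasible bp' bm' \<theta>' \<longrightarrow>
        objective w z lam bp bm \<theta> \<le> objective w z lam bp' bm' \<theta>')"

definition lam1 :: "real \<Rightarrow> real^'n \<Rightarrow> ereal" where
  "lam1 w z = (let S = {lam. lam \<ge> 0 \<and> l1norm (soft_vec z lam) + lam \<le> w} in
     if S = {} then \<infinity> else ereal (LEAST lam. lam \<in> S))"

definition lam3 :: "real \<Rightarrow> real^'n \<Rightarrow> ereal" where
  "lam3 w z = (let S = {lam. lam \<ge> 0 \<and> l1norm (soft_vec z (2 * lam)) \<ge> w} in
     if S = {} then -\<infinity> else if \<not> bdd_above S then \<infinity> else ereal (GREATEST lam. lam \<in> S))"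

definition lam4 :: "real \<Rightarrow> real^'n \<Rightarrow> real" where
  "lam4 w z = (w + linfnorm z) / 2"

end

theory Submission
  imports Defs
begin


definition Lf :: "real^'n \<Rightarrow> real \<Rightarrow> real" where
  "Lf z m = (\<Sum>i\<in>UNIV. max (\<bar>z$i\<bar> - m) 0)"

lemma soft_opt:
  assumes c: "c \<ge> 0"
  shows "(1/2)*(z - soft z c)\<^sup>2 + c*\<bar>soft z c\<bar> \<le> (1/2)*(z-x)\<^sup>2 + c*\<bar>x\<bar>"
proof -
  have e2: "(z-x)\<^sup>2 = z*z - 2*(z*x) + x*x" by (simp add: power2_eq_square algebra_simps)
  show ?thesis
  proof (cases "z > c")
    case True
    then have s: "soft z c = z - c" using c by (simp add: soft_def sgn_if)
    have a: "c*x \<le> c*\<bar>x\<bar>" using c by (simp add: mult_left_mono)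
    have h: "0 \<le> z*z+x*x+c*c-2*(z*x)-2*(z*c)+2*(x*c)"
      using zero_le_power2[of "z-x-c"] by (simp add: power2_eq_square algebra_simps)
    have l: "(1/2)*(z - soft z c)\<^sup>2 + c*\<bar>soft z c\<bar> = (1/2)*(c*c) + (c*z - c*c)"
      unfolding s using True c by (simp add: power2_eq_square algebra_simps)
    show ?thesis unfolding l e2 using a h by (simp add: algebra_simps)
  next
    case False
    show ?thesis
    proof (cases "z < -c")
      case True
      then have s: "soft z c = z + c" using c by (simp add: soft_def sgn_if)
      have a: "-(c*x) \<le> c*\<bar>x\<bar>" using c by (metis abs_ge_minus_self abs_mult abs_of_nonneg)
      have h: "0 \<le> z*z+x*x+c*c-2*(z*x)+2*(z*c)-2*(x*c)"
        using zero_le_power2[of "z-x+c"] by (simp add: power2_eq_square algebra_simps)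
      have l: "(1/2)*(z - soft z c)\<^sup>2 + c*\<bar>soft z c\<bar> = (1/2)*(c*c) + (-(c*z) - c*c)"
        using s True c by (simp add: power2_eq_square algebra_simps)
      show ?thesis unfolding l e2 using a h by (simp add: algebra_simps)
    next
      case F2: False
      then have s: "soft z c = 0" using False by (simp add: soft_def)
      have m: "\<bar>z\<bar>*\<bar>x\<bar> \<le> c*\<bar>x\<bar>" using False F2 by (intro mult_right_mono) auto
      have zx: "z*x \<le> \<bar>z\<bar>*\<bar>x\<bar>" by (metis abs_ge_self abs_mult)
      have xx: "0 \<le> x*x" by simp
      have l: "(1/2)*(z - soft z c)\<^sup>2 + c*\<bar>soft z c\<bar> = (1/2)*(z*z)"
        using s by (simp add: power2_eq_square)
      have m': "\<bar>x\<bar>*\<bar>z\<bar> \<le> c*\<bar>x\<bar>" using m by (simp add: mult.commute)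
      have zx': "x*z \<le> \<bar>x\<bar>*\<bar>z\<bar>" using zx by (simp add: mult.commute)
      have "x * z \<le> c * \<bar>x\<bar> + x * x / 2" using m' zx' xx by linarith
      then show ?thesis unfolding l e2 by (simp add: algebra_simps)
    qed
  qed
qed

lemma abs_soft: "c \<ge> 0 \<Longrightarrow> \<bar>soft x c\<bar> = max (\<bar>x\<bar> - c) 0"
  by (auto simp: soft_def abs_mult sgn_if)

lemma soft_nonneg: "w \<ge> 0 \<Longrightarrow> c \<ge> 0 \<Longrightarrow> soft w c = max (w - c) 0"
  by (auto simp: soft_def sgn_if)

lemma l1_soft: "m \<ge> 0 \<Longrightarrow> l1norm (soft_vec z m) = Lf z m"
  by (simp add: l1norm_def soft_vec_def Lf_def abs_soft)

lemma norm2_sum: "(norm (x::real^'n))\<^sup>2 = (\<Sum>i\<in>UNIV. (x$i)\<^sup>2)"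
  unfolding power2_norm_eq_inner inner_vec_def by (simp add: power2_eq_square)

lemma objective_sum:
  "objective w z lam bp bm \<theta> = (1/2)*(w-(bp-bm))\<^sup>2 + lam*(bp+bm) +
     (\<Sum>i\<in>UNIV. (1/2)*(z$i - \<theta>$i)\<^sup>2 + lam*\<bar>\<theta>$i\<bar>)"
  by (simp add: objective_def norm2_sum l1norm_def sum.distrib sum_distrib_left)

lemma linf_ge: "\<bar>z$i\<bar> \<le> linfnorm z"
  unfolding linfnorm_def by (rule Max_ge) auto

lemma linf_attained: "\<exists>i. \<bar>z$i\<bar> = linfnorm z"
proof -
  have "linfnorm z \<in> range (\<lambda>i. \<bar>z $ i\<bar>)" unfolding linfnorm_def by (rule Max_in) auto
  then show ?thesis by auto
qed

lemma soft_vec_zero: "linfnorm z \<le> m \<Longrightarrow> soft_vec z m = 0"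
proof -
  assume a: "linfnorm z \<le> m"
  have "soft (z$i) m = 0" for i using linf_ge[of z i] a by (simp add: soft_def max_def)
  then show ?thesis by (simp add: soft_vec_def vec_eq_iff)
qed

lemma Lf_cont: "continuous_on UNIV (Lf z)"
  unfolding Lf_def by (intro continuous_intros)

lemma Lf_mono: "a \<le> b \<Longrightarrow> Lf z b \<le> Lf z a"
  unfolding Lf_def by (intro sum_mono) auto

lemma Lf_nonneg: "Lf z a \<ge> 0"
  unfolding Lf_def by (intro sum_nonneg) auto

lemma Lf_ge_linf: "Lf z a \<ge> linfnorm z - a"
proof -
  obtain i where i: "\<bar>z$i\<bar> = linfnorm z" using linf_attained by blast
  have "max (\<bar>z$i\<bar> - a) 0 \<le> Lf z a" unfolding Lf_def
    by (rule member_le_sum[where f="\<lambda>i. max (\<bar>z$i\<bar> - a) 0"]) auto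
  then show ?thesis using i by linarith
qed



lemma vec_opt:
  fixes z \<theta> \<theta>' :: "real^'n"
  assumes c: "c \<ge> 0" and th: "\<theta> = soft_vec z c"
  shows "(1/2)*(norm (z-\<theta>))\<^sup>2 + c*l1norm \<theta> \<le> (1/2)*(norm (z-\<theta>'))\<^sup>2 + c*l1norm \<theta>'"
proof -
  have eq: "(1/2)*(norm (z-x))\<^sup>2 + c*l1norm x = (\<Sum>i\<in>UNIV. (1/2)*(z$i - x$i)\<^sup>2 + c*\<bar>x$i\<bar>)" for x :: "real^'n"
    by (simp add: norm2_sum l1norm_def sum.distrib sum_distrib_left)
  show ?thesis unfolding eq
  proof (rule sum_mono)
    fix i
    have "(1/2)*(z$i - soft (z$i) c)\<^sup>2 + c*\<bar>soft (z$i) c\<bar> \<le> (1/2)*(z$i-\<theta>'$i)\<^sup>2 + c*\<bar>\<theta>'$i\<bar>"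
      by (rule soft_opt[OF c])
    then show "(1/2)*(z$i - \<theta>$i)\<^sup>2 + c*\<bar>\<theta>$i\<bar> \<le> (1/2)*(z$i-\<theta>'$i)\<^sup>2 + c*\<bar>\<theta>'$i\<bar>"
      by (simp add: th soft_vec_def)
  qed
qed

lemma certificate:
  fixes z \<theta> :: "real^'n"
  assumes a0: "0 \<le> \<alpha>" and al: "\<alpha> \<le> lam" and th: "\<theta> = soft_vec z (lam+\<alpha>)"
    and b: "\<beta> = soft w (lam-\<alpha>)"
    and tb: "\<bar>\<beta>\<bar> \<le> t" and tl: "l1norm \<theta> \<le> t"
    and c1: "\<alpha> < lam \<Longrightarrow> t = \<bar>\<beta>\<bar>" and c2: "0 < \<alpha> \<Longrightarrow> l1norm \<theta> = t"
  shows "is_solution w z lam ((t+\<beta>)/2) ((t-\<beta>)/2) \<theta>"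
  unfolding is_solution_def
proof (intro conjI allI impI)
  have e2: "(t + \<beta>) / 2 + (t - \<beta>) / 2 = t" by (simp add: field_simps)
  have e1: "(t + \<beta>) / 2 - (t - \<beta>) / 2 = \<beta>" by (simp add: field_simps)
  from e2 show "feasible ((t + \<beta>) / 2) ((t - \<beta>) / 2) \<theta>" using tb tl by (auto simp: feasible_def)
  fix bp' bm' and \<theta>' :: "real^'n"
  assume f: "feasible bp' bm' \<theta>'"
  define t' where "t' = bp' + bm'"
  define \<beta>' where "\<beta>' = bp' - bm'"
  have tb': "\<bar>\<beta>'\<bar> \<le> t'" and tl': "l1norm \<theta>' \<le> t'" using f by (auto simp: feasible_def t'_def \<beta>'_def)
  have Q: "(1/2)*(norm (z-\<theta>))\<^sup>2 + (lam+\<alpha>)*l1norm \<theta> \<le> (1/2)*(norm (z-\<theta>'))\<^sup>2 + (lam+\<alpha>)*l1norm \<theta>'"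
    using vec_opt[of "lam+\<alpha>" \<theta> z \<theta>'] a0 al th by simp
  have B: "(1/2)*(w-\<beta>)\<^sup>2 + (lam-\<alpha>)*\<bar>\<beta>\<bar> \<le> (1/2)*(w-\<beta>')\<^sup>2 + (lam-\<alpha>)*\<bar>\<beta>'\<bar>"
    using soft_opt[of "lam-\<alpha>" w \<beta>'] al b by simp
  have f1: "(lam-\<alpha>)*\<bar>\<beta>\<bar> = (lam-\<alpha>)*t" using c1 al by (cases "\<alpha> < lam") auto
  have f2: "\<alpha>*l1norm \<theta> = \<alpha>*t" using c2 a0 by (cases "0 < \<alpha>") auto
  have f3: "(lam-\<alpha>)*\<bar>\<beta>'\<bar> \<le> (lam-\<alpha>)*t'" using tb' al by (intro mult_left_mono) auto
  have f4: "\<alpha>*l1norm \<theta>' \<le> \<alpha>*t'" using tl' a0 by (intro mult_left_mono) auto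
  have o1: "objective w z lam ((t+\<beta>)/2) ((t-\<beta>)/2) \<theta> =
     (1/2)*(w-\<beta>)\<^sup>2 + (1/2)*(norm (z-\<theta>))\<^sup>2 + lam*t + lam*l1norm \<theta>"
    unfolding objective_def e1 e2 by simp
  have o2: "objective w z lam bp' bm' \<theta>' =
     (1/2)*(w-\<beta>')\<^sup>2 + (1/2)*(norm (z-\<theta>'))\<^sup>2 + lam*t' + lam*l1norm \<theta>'"
    by (simp add: objective_def t'_def \<beta>'_def)
  have Q': "(1/2)*(norm (z-\<theta>))\<^sup>2 + lam*l1norm \<theta> + \<alpha>*l1norm \<theta> \<le> (1/2)*(norm (z-\<theta>'))\<^sup>2 + lam*l1norm \<theta>' + \<alpha>*l1norm \<theta>'"
    using Q by (simp add: algebra_simps)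
  have B': "(1/2)*(w-\<beta>)\<^sup>2 + lam*\<bar>\<beta>\<bar> - \<alpha>*\<bar>\<beta>\<bar> \<le> (1/2)*(w-\<beta>')\<^sup>2 + lam*\<bar>\<beta>'\<bar> - \<alpha>*\<bar>\<beta>'\<bar>"
    using B by (simp add: algebra_simps)
  have f1': "lam*\<bar>\<beta>\<bar> - \<alpha>*\<bar>\<beta>\<bar> = lam*t - \<alpha>*t" using f1 by (simp add: algebra_simps)
  have f3': "lam*\<bar>\<beta>'\<bar> - \<alpha>*\<bar>\<beta>'\<bar> \<le> lam*t' - \<alpha>*t'" using f3 by (simp add: algebra_simps)
  show "objective w z lam ((t+\<beta>)/2) ((t-\<beta>)/2) \<theta> \<le> objective w z lam bp' bm' \<theta>'"
    unfolding o1 o2 using Q' B' f1' f2 f3' f4 by linarith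
qed

lemma aux_lin: "(a::real) = (b+c)/2 - g/8 \<Longrightarrow> d \<le> (e+f)/2 \<Longrightarrow> a + d \<le> (b+e+(c+f))/2 - g/8"
  by (simp add: field_simps)

lemma aux2: "(o1::real) = b1 + l1 + s1 \<Longrightarrow> o2 = b2 + l2 + s2 \<Longrightarrow> om = bm + lm + sm \<Longrightarrow>
  lm = (l1+l2)/2 \<Longrightarrow> bm = (b1+b2)/2 - d/8 \<Longrightarrow> sm \<le> (s1+s2)/2 - e/8 \<Longrightarrow> o1 \<le> om \<Longrightarrow> o2 \<le> om \<Longrightarrow> d/8 + e/8 \<le> 0"
  by (simp add: field_simps)

lemma uniqueness:
  fixes z \<theta>1 \<theta>2 :: "real^'n"
  assumes s1: "is_solution w z lam bp1 bm1 \<theta>1" and s2: "is_solution w z lam bp2 bm2 \<theta>2"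
    and lam: "lam \<ge> 0"
  shows "bp1 - bm1 = bp2 - bm2 \<and> \<theta>1 = \<theta>2"
proof -
  define \<theta> where "\<theta> = (\<chi> i. (\<theta>1$i + \<theta>2$i)/2)"
  define bp where "bp = (bp1+bp2)/2"
  define bm where "bm = (bm1+bm2)/2"
  have fe1: "feasible bp1 bm1 \<theta>1" and fe2: "feasible bp2 bm2 \<theta>2"
    using s1 s2 by (auto simp: is_solution_def)
  have l1: "l1norm \<theta> \<le> (l1norm \<theta>1 + l1norm \<theta>2)/2"
  proof -
    have "l1norm \<theta> \<le> (\<Sum>i\<in>UNIV. (\<bar>\<theta>1$i\<bar> + \<bar>\<theta>2$i\<bar>)/2)"
      unfolding l1norm_def \<theta>_def by (intro sum_mono) (simp add: abs_triangle_ineq)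
    also have "\<dots> = (l1norm \<theta>1 + l1norm \<theta>2)/2"
      by (simp only: l1norm_def sum_divide_distrib[symmetric] sum.distrib)
    finally show ?thesis .
  qed
  have fe: "feasible bp bm \<theta>" using fe1 fe2 l1 by (auto simp: feasible_def bp_def bm_def field_simps)
  define q where "q x i = (1/2)*(z$i - x$i)\<^sup>2 + lam*\<bar>x$i\<bar>" for x :: "real^'n" and i
  have coord: "q \<theta> i \<le> (q \<theta>1 i + q \<theta>2 i)/2 - (\<theta>1$i - \<theta>2$i)\<^sup>2/8" for i
  proof -
    have e: "(1/2)*(z$i - \<theta>$i)\<^sup>2 = ((1/2)*(z$i - \<theta>1$i)\<^sup>2 + (1/2)*(z$i - \<theta>2$i)\<^sup>2)/2 - (\<theta>1$i - \<theta>2$i)\<^sup>2/8"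
      by (simp add: \<theta>_def power2_eq_square field_simps)
    have a: "lam*\<bar>\<theta>$i\<bar> \<le> (lam*\<bar>\<theta>1$i\<bar> + lam*\<bar>\<theta>2$i\<bar>)/2"
    proof -
      have "\<bar>\<theta>$i\<bar> \<le> (\<bar>\<theta>1$i\<bar> + \<bar>\<theta>2$i\<bar>)/2" by (simp add: \<theta>_def abs_triangle_ineq)
      then have "lam*\<bar>\<theta>$i\<bar> \<le> lam*((\<bar>\<theta>1$i\<bar> + \<bar>\<theta>2$i\<bar>)/2)" using lam by (intro mult_left_mono)
      then show ?thesis by (simp add: algebra_simps)
    qed
    show ?thesis unfolding q_def by (rule aux_lin[OF e a])
  qed
  have S: "(\<Sum>i\<in>UNIV. q \<theta> i) \<le> ((\<Sum>i\<in>UNIV. q \<theta>1 i) + (\<Sum>i\<in>UNIV. q \<theta>2 i))/2 - (\<Sum>i\<in>UNIV. (\<theta>1$i - \<theta>2$i)\<^sup>2)/8"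
  proof -
    have "(\<Sum>i\<in>UNIV. q \<theta> i) \<le> (\<Sum>i\<in>UNIV. (q \<theta>1 i + q \<theta>2 i)/2 - (\<theta>1$i - \<theta>2$i)\<^sup>2/8)"
      by (rule sum_mono) (rule coord)
    also have "\<dots> = ((\<Sum>i\<in>UNIV. q \<theta>1 i) + (\<Sum>i\<in>UNIV. q \<theta>2 i))/2 - (\<Sum>i\<in>UNIV. (\<theta>1$i - \<theta>2$i)\<^sup>2)/8"
      by (simp only: sum_subtractf sum_divide_distrib[symmetric] sum.distrib)
    finally show ?thesis .
  qed
  have ob: "objective w z lam a b x = (1/2)*(w-(a-b))\<^sup>2 + lam*(a+b) + (\<Sum>i\<in>UNIV. q x i)" for a b x
    by (simp add: objective_sum q_def)
  have eb: "(1/2)*(w-(bp-bm))\<^sup>2 = ((1/2)*(w-(bp1-bm1))\<^sup>2 + (1/2)*(w-(bp2-bm2))\<^sup>2)/2 - ((bp1-bm1)-(bp2-bm2))\<^sup>2/8"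
    by (simp add: bp_def bm_def power2_eq_square field_simps)
  have m1: "objective w z lam bp1 bm1 \<theta>1 \<le> objective w z lam bp bm \<theta>"
    using s1 fe by (auto simp: is_solution_def)
  have m2: "objective w z lam bp2 bm2 \<theta>2 \<le> objective w z lam bp bm \<theta>"
    using s2 fe by (auto simp: is_solution_def)
  have sumd: "((bp1-bm1)-(bp2-bm2))\<^sup>2/8 + (\<Sum>i\<in>UNIV. (\<theta>1$i - \<theta>2$i)\<^sup>2)/8 \<le> 0"
  proof (rule aux2[OF ob ob ob _ eb S m1 m2])
    show "lam * (bp + bm) = (lam * (bp1 + bm1) + lam * (bp2 + bm2)) / 2"
      by (simp add: bp_def bm_def field_simps)
  qed
  have p1: "0 \<le> (\<Sum>i\<in>UNIV. (\<theta>1$i - \<theta>2$i)\<^sup>2)" by (simp add: sum_nonneg)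
  have p2: "0 \<le> ((bp1-bm1)-(bp2-bm2))\<^sup>2" by simp
  have z1: "((bp1-bm1)-(bp2-bm2))\<^sup>2 = 0" using sumd p1 p2 by linarith
  have z2: "(\<Sum>i\<in>UNIV. (\<theta>1$i - \<theta>2$i)\<^sup>2) = 0" using sumd p1 p2 by linarith
  have "\<forall>i\<in>UNIV. (\<theta>1$i - \<theta>2$i)\<^sup>2 = 0"
    using z2 by (subst (asm) sum_nonneg_eq_0_iff) auto
  then have "\<theta>1 = \<theta>2" by (simp add: vec_eq_iff)
  moreover have "bp1 - bm1 = bp2 - bm2" using z1 by simp
  ultimately show ?thesis by simp
qed



lemma sol_eq:
  fixes z \<theta> :: "real^'n"
  assumes sol: "is_solution w z lam bp bm \<theta>" and lam: "lam \<ge> 0"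
    and a0: "0 \<le> \<alpha>" and al: "\<alpha> \<le> lam"
    and b: "\<beta> = soft w (lam-\<alpha>)"
    and tb: "\<bar>\<beta>\<bar> \<le> t" and tl: "l1norm (soft_vec z (lam+\<alpha>)) \<le> t"
    and c1: "\<alpha> < lam \<Longrightarrow> t = \<bar>\<beta>\<bar>" and c2: "0 < \<alpha> \<Longrightarrow> l1norm (soft_vec z (lam+\<alpha>)) = t"
  shows "bp - bm = \<beta> \<and> \<theta> = soft_vec z (lam+\<alpha>)"
proof -
  have "is_solution w z lam ((t+\<beta>)/2) ((t-\<beta>)/2) (soft_vec z (lam+\<alpha>))"
    by (rule certificate[OF a0 al refl b tb tl c1 c2])
  from uniqueness[OF sol this lam] show ?thesis by (simp add: field_simps)
qed

lemma l1_zero: "l1norm (0::real^'n) = 0" by (simp add: l1norm_def)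

lemma zero_gen:
  fixes z \<theta> :: "real^'n"
  assumes sol: "is_solution w z lam bp bm \<theta>" and lam: "lam \<ge> 0" and w: "w \<ge> 0"
    and a0: "0 \<le> \<alpha>" and al: "\<alpha> \<le> lam" and h1: "w - lam + \<alpha> \<le> 0" and h2: "linfnorm z \<le> lam + \<alpha>"
  shows "bp - bm = 0 \<and> \<theta> = 0"
proof -
  have s0: "soft_vec z (lam+\<alpha>) = 0" by (rule soft_vec_zero[OF h2])
  have b0: "soft w (lam-\<alpha>) = 0" using soft_nonneg[OF w, of "lam-\<alpha>"] al h1 by simp
  have "bp - bm = 0 \<and> \<theta> = soft_vec z (lam+\<alpha>)"
    by (rule sol_eq[OF sol lam a0 al b0[symmetric], of 0]) (auto simp: s0 l1_zero)
  then show ?thesis using s0 by simp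
qed

lemma closed_S1: "closed {l. 0 \<le> l \<and> Lf z l + l \<le> w}"
  unfolding Lf_def by (intro closed_Collect_conj closed_Collect_le continuous_intros)

lemma closed_S3: "closed {l. 0 \<le> l \<and> w \<le> Lf z (2*l)}"
  unfolding Lf_def by (intro closed_Collect_conj closed_Collect_le continuous_intros)

lemma S1_eq: "{l. l \<ge> 0 \<and> l1norm (soft_vec z l) + l \<le> w} = {l. 0 \<le> l \<and> Lf z l + l \<le> w}"
  by (auto simp: l1_soft)

lemma S3_eq: "{l. l \<ge> 0 \<and> l1norm (soft_vec z (2*l)) \<ge> w} = {l. 0 \<le> l \<and> w \<le> Lf z (2*l)}"
  by (auto simp: l1_soft)

lemma least_S1:
  fixes z :: "real^'n"
  assumes ne: "{l. 0 \<le> l \<and> Lf z l + l \<le> w} \<noteq> {}"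
  defines "S \<equiv> {l. 0 \<le> l \<and> Lf z l + l \<le> w}"
  shows "(LEAST l. l \<in> S) \<in> S \<and> (\<forall>y\<in>S. (LEAST l. l \<in> S) \<le> y)"
proof -
  have bb: "bdd_below S" unfolding S_def by (rule bdd_belowI[of _ 0]) auto
  have i: "Inf S \<in> S" using closed_contains_Inf[OF ne[folded S_def] bb] closed_S1[of z w] S_def by simp
  have le: "\<forall>y\<in>S. Inf S \<le> y" using bb by (auto intro: cInf_lower)
  have "(LEAST l. l \<in> S) = Inf S" by (rule Least_equality) (use i le in auto)
  then show ?thesis using i le by simp
qed

lemma greatest_S3:
  fixes z :: "real^'n"
  assumes ne: "{l. 0 \<le> l \<and> w \<le> Lf z (2*l)} \<noteq> {}"
    and bb: "bdd_above {l. 0 \<le> l \<and> w \<le> Lf z (2*l)}"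
  defines "S \<equiv> {l. 0 \<le> l \<and> w \<le> Lf z (2*l)}"
  shows "(GREATEST l. l \<in> S) \<in> S"
proof -
  have i: "Sup S \<in> S" using closed_contains_Sup[OF ne[folded S_def] bb[folded S_def]] closed_S3[of w z] S_def by simp
  have le: "\<forall>y\<in>S. y \<le> Sup S" using bb[folded S_def] by (auto intro: cSup_upper)
  have "(GREATEST l. l \<in> S) = Sup S" by (rule Greatest_equality) (use i le in auto)
  then show ?thesis using i by simp
qed



lemma convex_step:
  fixes z :: "real^'n"
  assumes m0: "0 \<le> m" and ml: "m \<le> lam" and lw: "lam \<le> w" and hm: "Lf z m + m \<le> w"
    and lw2: "linfnorm z \<le> w"
  shows "Lf z lam + lam \<le> w"
proof (cases "m = w")
  case True then show ?thesis using ml lw hm by simp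
next
  case False
  then have wm: "w - m > 0" using ml lw by simp
  have coord: "(w-m)*max (\<bar>z$i\<bar> - lam) 0 \<le> (w-lam)*max (\<bar>z$i\<bar> - m) 0" for i
  proof (cases "\<bar>z$i\<bar> \<le> lam")
    case True
    then show ?thesis using lw by simp
  next
    case False
    have a: "\<bar>z$i\<bar> \<le> w" using linf_ge[of z i] lw2 by simp
    have e: "(w-lam)*(\<bar>z$i\<bar> - m) - (w-m)*(\<bar>z$i\<bar> - lam) = (lam-m)*(w-\<bar>z$i\<bar>)"
      by (simp add: algebra_simps)
    have "0 \<le> (lam-m)*(w-\<bar>z$i\<bar>)" using ml a by simp
    then show ?thesis using False ml e by simp
  qed
  have "(w-m)*Lf z lam \<le> (w-lam)*Lf z m"
    unfolding Lf_def sum_distrib_left by (rule sum_mono) (rule coord)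
  also have "\<dots> \<le> (w-lam)*(w-m)" using hm lw by (intro mult_left_mono) auto
  finally have "(w-m)*Lf z lam \<le> (w-m)*(w-lam)" by (simp add: mult.commute)
  then have "Lf z lam \<le> w - lam" using wm by simp
  then show ?thesis by simp
qed



lemma case_b:
  fixes z \<theta> :: "real^'n"
  assumes sol: "is_solution w z lam bp bm \<theta>" and lam: "lam > 0" and w: "w \<ge> 0"
    and lw2: "linfnorm z \<le> w" and l1: "lam1 w z \<le> ereal lam" and lw: "lam < w"
  shows "bp - bm = w - lam \<and> \<theta> = soft_vec z lam"
proof -
  define S where "S = {l. 0 \<le> l \<and> Lf z l + l \<le> w}"
  have ne: "S \<noteq> {}"
  proof
    assume "S = {}"
    then have "lam1 w z = \<infinity>" unfolding lam1_def Let_def S1_eq S_def by simp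
    then show False using l1 by simp
  qed
  then have "lam1 w z = ereal (LEAST l. l \<in> S)" unfolding lam1_def Let_def S1_eq S_def by simp
  then have ml: "(LEAST l. l \<in> S) \<le> lam" using l1 by simp
  have mS: "(LEAST l. l \<in> S) \<in> S" using least_S1[OF ne[unfolded S_def]] S_def by simp
  have hl: "Lf z lam + lam \<le> w"
    by (rule convex_step[OF _ ml _ _ lw2]) (use mS lw S_def in auto)
  have b: "w - lam = soft w (lam - 0)" using soft_nonneg[OF w, of lam] lam lw by simp
  have "bp - bm = w - lam \<and> \<theta> = soft_vec z (lam+0)"
    by (rule sol_eq[OF sol _ _ _ b, of "w-lam"]) (use lam lw hl l1_soft[of lam z] in auto)
  then show ?thesis by simp
qed



lemma case_alpha:
  fixes z \<theta> :: "real^'n"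
  assumes sol: "is_solution w z lam bp bm \<theta>" and lam: "lam > 0" and w: "w \<ge> 0"
    and g0: "Lf z lam + lam > w"
  shows "\<exists>\<alpha>>0. bp - bm = w - lam + \<alpha> \<and> \<theta> = soft_vec z (lam + \<alpha>)"
proof (cases "w \<le> Lf z (2*lam)")
  case True
  have b: "w = soft w (lam - lam)" using soft_nonneg[OF w, of 0] w by simp
  have e2: "lam + lam = 2*lam" by simp
  have l1e: "l1norm (soft_vec z (lam+lam)) = Lf z (2*lam)" unfolding e2 using lam by (intro l1_soft) simp
  have "bp - bm = w \<and> \<theta> = soft_vec z (lam+lam)"
  proof (rule sol_eq[OF sol _ _ _ b, of "Lf z (2*lam)"])
    show "0 \<le> lam" "0 \<le> lam" "lam \<le> lam" using lam by auto
    show "\<bar>w\<bar> \<le> Lf z (2*lam)" using True w by simp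
    show "l1norm (soft_vec z (lam+lam)) \<le> Lf z (2*lam)" using l1e by simp
    show "lam < lam \<Longrightarrow> Lf z (2*lam) = \<bar>w\<bar>" by simp
    show "0 < lam \<Longrightarrow> l1norm (soft_vec z (lam+lam)) = Lf z (2*lam)" using l1e by simp
  qed
  then show ?thesis using lam by (intro exI[of _ lam]) auto
next
  case False
  define g where "g a = Lf z (lam+a) - (w - lam + a)" for a
  have gc: "continuous_on {0..lam} g" unfolding g_def Lf_def by (intro continuous_intros)
  have e2: "lam + lam = 2*lam" by simp
  have "g lam \<le> 0" using False unfolding g_def e2 by simp
  moreover have "0 \<le> g 0" using g0 by (simp add: g_def)
  ultimately obtain a where a: "0 \<le> a" "a \<le> lam" "g a = 0"
    using IVT2'[of g lam 0 0, OF _ _ _ gc] lam by auto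
  have a0: "a \<noteq> 0" using a g0 by (auto simp: g_def)
  have al: "a \<noteq> lam"
  proof
    assume "a = lam"
    then have "Lf z (2*lam) = w" using a(3) unfolding g_def e2 by simp
    then show False using False by simp
  qed
  have Lnn: "Lf z (lam+a) \<ge> 0" by (rule Lf_nonneg)
  have eq: "Lf z (lam+a) = w - lam + a" using a by (simp add: g_def)
  have b: "w - lam + a = soft w (lam - a)" using soft_nonneg[OF w, of "lam-a"] a Lnn eq by simp
  have l1e: "l1norm (soft_vec z (lam + a)) = w - lam + a" using l1_soft[of "lam+a" z] lam a eq by simp
  have "bp - bm = w - lam + a \<and> \<theta> = soft_vec z (lam+a)"
    by (rule sol_eq[OF sol _ _ _ b, of "w - lam + a"]) (use lam a l1e Lnn eq in auto)
  then show ?thesis using a a0 by (intro exI[of _ a]) auto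
qed



lemma case_lam3:
  fixes z \<theta> :: "real^'n"
  assumes sol: "is_solution w z lam bp bm \<theta>" and lam: "lam > 0" and w: "w \<ge> 0"
    and l3: "ereal lam < lam3 w z"
  shows "bp - bm = w \<and> \<theta> = soft_vec z (2 * lam)"
proof -
  define S where "S = {l. 0 \<le> l \<and> w \<le> Lf z (2*l)}"
  have ne: "S \<noteq> {}"
  proof
    assume "S = {}"
    then have "lam3 w z = -\<infinity>" unfolding lam3_def Let_def S3_eq S_def by simp
    then show False using l3 by simp
  qed
  have "\<exists>y\<in>S. lam \<le> y"
  proof (cases "bdd_above S")
    case False
    show ?thesis
    proof (rule ccontr)
      assume nn: "\<not> (\<exists>y\<in>S. lam \<le> y)"
      have "x \<le> lam" if "x \<in> S" for x
      proof -
        have "\<not> lam \<le> x" using nn that by blast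
        then show ?thesis by simp
      qed
      then have "bdd_above S" by (rule bdd_aboveI)
      then show False using False by simp
    qed
  next
    case True
    have "lam3 w z = ereal (GREATEST l. l \<in> S)" unfolding lam3_def Let_def S3_eq S_def[symmetric] using ne True by simp
    then have G1: "lam < (GREATEST l. l \<in> S)" using l3 by simp
    have G2: "(GREATEST l. l \<in> S) \<in> S" using greatest_S3[of w z] ne True unfolding S_def by blast
    show ?thesis
    proof (rule bexI)
      show "lam \<le> (GREATEST l. l \<in> S)" using G1 by (rule less_imp_le)
      show "(GREATEST l. l \<in> S) \<in> S" by (rule G2)
    qed
  qed
  then obtain y where y: "y \<in> S" "lam \<le> y" by blast
  have m: "Lf z (2*y) \<le> Lf z (2*lam)" by (rule Lf_mono) (use y in simp)
  have "w \<le> Lf z (2*y)" using y(1) unfolding S_def by simp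
  with m have hw: "w \<le> Lf z (2*lam)" by linarith
  have b: "w = soft w (lam - lam)" using soft_nonneg[OF w, of 0] w by simp
  have e2: "lam + lam = 2*lam" by simp
  have l1e: "l1norm (soft_vec z (lam+lam)) = Lf z (2*lam)" unfolding e2 using lam by (intro l1_soft) simp
  have "bp - bm = w \<and> \<theta> = soft_vec z (lam+lam)"
  proof (rule sol_eq[OF sol _ _ _ b, of "Lf z (2*lam)"])
    show "0 \<le> lam" "0 \<le> lam" "lam \<le> lam" using lam by auto
    show "\<bar>w\<bar> \<le> Lf z (2*lam)" using hw w by simp
    show "l1norm (soft_vec z (lam+lam)) \<le> Lf z (2*lam)" using l1e by simp
    show "lam < lam \<Longrightarrow> Lf z (2*lam) = \<bar>w\<bar>" by simp
    show "0 < lam \<Longrightarrow> l1norm (soft_vec z (lam+lam)) = Lf z (2*lam)" using l1e by simp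
  qed
  then show ?thesis unfolding e2 .
qed



lemma lam1_not:
  fixes z :: "real^'n"
  assumes lam: "lam > 0" and l1: "ereal lam < lam1 w z"
  shows "Lf z lam + lam > w"
proof (rule ccontr)
  assume "\<not> ?thesis"
  then have inS: "lam \<in> {l. 0 \<le> l \<and> Lf z l + l \<le> w}" using lam by simp
  define S where "S = {l. 0 \<le> l \<and> Lf z l + l \<le> w}"
  have ne: "S \<noteq> {}" using inS S_def by auto
  then have "lam1 w z = ereal (LEAST l. l \<in> S)" unfolding lam1_def Let_def S1_eq S_def by simp
  moreover have "(LEAST l. l \<in> S) \<le> lam" using least_S1[OF ne[unfolded S_def]] inS S_def by simp
  ultimately show False using l1 by simp
qed


theorem proposition1:
  fixes w lam bp bm :: real and z \<theta> :: "real^'n"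
  assumes w_nonneg: "w \<ge> 0"
    and lam_pos: "lam > 0"
    and sol: "is_solution w z lam bp bm \<theta>"
  shows
   "(linfnorm z \<le> l1norm z \<and> l1norm z < w \<longrightarrow>
       (lam \<ge> w \<longrightarrow> bp - bm = 0 \<and> \<theta> = 0) \<and>
       (lam1 w z \<le> ereal lam \<and> lam < w \<longrightarrow> bp - bm = w - lam \<and> \<theta> = soft_vec z lam) \<and>
       (ereal lam < lam1 w z \<longrightarrow>
          (\<exists>\<alpha>>0. bp - bm = w - lam + \<alpha> \<and> \<theta> = soft_vec z (lam + \<alpha>)))) \<and>
    (linfnorm z \<le> w \<and> w \<le> l1norm z \<longrightarrow>
       (lam \<ge> w \<longrightarrow> bp - bm = 0 \<and> \<theta> = 0) \<and>
       (lam1 w z \<le> ereal lam \<and> lam < w \<longrightarrow> bp - bm = w - lam \<and> \<theta> = soft_vec z lam) \<and>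
       (lam3 w z \<le> ereal lam \<and> ereal lam < lam1 w z \<longrightarrow>
          (\<exists>\<alpha>>0. bp - bm = w - lam + \<alpha> \<and> \<theta> = soft_vec z (lam + \<alpha>))) \<and>
       (ereal lam < lam3 w z \<longrightarrow> bp - bm = w \<and> \<theta> = soft_vec z (2 * lam))) \<and>
    (w < linfnorm z \<and> linfnorm z \<le> l1norm z \<longrightarrow>
       (lam \<ge> lam4 w z \<longrightarrow> bp - bm = 0 \<and> \<theta> = 0) \<and>
       (lam3 w z \<le> ereal lam \<and> lam < lam4 w z \<longrightarrow>
          (\<exists>\<alpha>>0. bp - bm = w - lam + \<alpha> \<and> \<theta> = soft_vec z (lam + \<alpha>))) \<and>
       (ereal lam < lam3 w z \<longrightarrow> bp - bm = w \<and> \<theta> = soft_vec z (2 * lam)))"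
  proof -
  have lam0: "lam \<ge> 0" using lam_pos by simp
  have zeroA: "bp - bm = 0 \<and> \<theta> = 0" if "linfnorm z \<le> lam" "w \<le> lam"
    by (rule zero_gen[OF sol lam0 w_nonneg, of 0]) (use that lam0 in auto)
  have zero3: "bp - bm = 0 \<and> \<theta> = 0" if h: "w < linfnorm z" "lam4 w z \<le> lam"
  proof (rule zero_gen[OF sol lam0 w_nonneg, of "max (linfnorm z - lam) 0"])
    have h2: "w + linfnorm z \<le> 2*lam" using h(2) by (simp add: lam4_def)
    show "0 \<le> max (linfnorm z - lam) 0" by simp
    show "max (linfnorm z - lam) 0 \<le> lam" using h2 w_nonneg lam0 by (simp add: max_def)
    show "w - lam + max (linfnorm z - lam) 0 \<le> 0" using h2 h(1) by (simp add: max_def)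
    show "linfnorm z \<le> lam + max (linfnorm z - lam) 0" by (simp add: max_def)
  qed
  have alpha1: "\<exists>\<alpha>>0. bp - bm = w - lam + \<alpha> \<and> \<theta> = soft_vec z (lam + \<alpha>)" if "ereal lam < lam1 w z"
    by (rule case_alpha[OF sol lam_pos w_nonneg lam1_not[OF lam_pos that]])
  have lb: "bp - bm = w - lam \<and> \<theta> = soft_vec z lam" if "linfnorm z \<le> w" "lam1 w z \<le> ereal lam" "lam < w"
    by (rule case_b[OF sol lam_pos w_nonneg that])
  have l3: "bp - bm = w \<and> \<theta> = soft_vec z (2 * lam)" if "ereal lam < lam3 w z"
    by (rule case_lam3[OF sol lam_pos w_nonneg that])
  have alpha3: "\<exists>\<alpha>>0. bp - bm = w - lam + \<alpha> \<and> \<theta> = soft_vec z (lam + \<alpha>)" if "w < linfnorm z"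
  proof (rule case_alpha[OF sol lam_pos w_nonneg])
    show "w < Lf z lam + lam" using Lf_ge_linf[of z lam] that by simp
  qed
  show ?thesis
    using zeroA zero3 alpha1 lb l3 alpha3 by (meson order.trans less_le_trans le_less_trans less_imp_le)
qed

end
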